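(* Let $K^{(1)},K^{(2)}$ be independent fractal percolations on $[0,1]$ with the same parameters $M\in\mathbb{N}_{\geq2}$ and $p\in[0,1]$. Then for any $n\in\mathbb{N}_0$, $$\mathbb{E}N(K_n^{(1)}\cap K_n^{(2)})=(Mp^2)^n\left(2-2M^{-n}-4p\frac{M-1}{M-p}\left[1-\left(\frac pM\right)^n\right]+2p^2\frac{M-1}{M-p^2}\left[1-\left(\frac{p^2}{M}\right)^n\right]\right).$$
   Context: Fractal percolation on $[0,1]$: $K_0=[0,1]$; given $K_{n-1}$, a union of closed grid intervals of length $M^{-(n-1)}$, each is divided into $M$ closed subintervals of length $M^{-n}$, each kept independently (of everything else) with probability $p$; $K_n$ is the union of kept subintervals. $N(A)$ denotes the number of isolated points of $A$. *)

theory Defs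
  imports "HOL-Probability.Probability"
begin

text \<open>Level-n grid intervals of [0,1] are indexed by i < M^n; interval i is
  [i/M^n, (i+1)/M^n].  A configuration K_n is encoded by the (finite) set of
  indices of kept level-n intervals.\<close>

definition children :: "nat \<Rightarrow> nat set \<Rightarrow> nat set" where
  "children M S = (\<Union>i\<in>S. {i * M..<i * M + M})"

fun frac_perc :: "nat \<Rightarrow> real \<Rightarrow> nat \<Rightarrow> nat set pmf" where
  "frac_perc M p 0 = return_pmf {0}"
| "frac_perc M p (Suc n) =
     bind_pmf (frac_perc M p n)
       (\<lambda>S. map_pmf (\<lambda>f. {j \<in> children M S. f j})
              (Pi_pmf (children M S) False (\<lambda>_. bernoulli_pmf p)))"

definition grid_set :: "nat \<Rightarrow> nat \<Rightarrow> nat set \<Rightarrow> real set" where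
  "grid_set M n S = (\<Union>i\<in>S. {real i / real M ^ n .. (real i + 1) / real M ^ n})"

definition isolated_pts :: "real set \<Rightarrow> real set" where
  "isolated_pts A = {x \<in> A. \<not> x islimpt A}"

definition num_isolated :: "real set \<Rightarrow> nat" where
  "num_isolated A = card (isolated_pts A)"

end

theory Submission
  imports Defs
begin


lemma measure_bind_pmf_real:
  "measure (measure_pmf (bind_pmf M N)) X = (\<integral>x. measure (measure_pmf (N x)) X \<partial>measure_pmf M)"
proof -
  have "emeasure (measure_pmf (bind_pmf M N)) X = (\<integral>\<^sup>+x. emeasure (measure_pmf (N x)) X \<partial>measure_pmf M)"
    by (rule emeasure_bind_pmf)
  also have "\<dots> = (\<integral>\<^sup>+x. ennreal (measure (measure_pmf (N x)) X) \<partial>measure_pmf M)"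
    by (simp add: measure_pmf.emeasure_eq_measure)
  also have "\<dots> = ennreal (\<integral>x. measure (measure_pmf (N x)) X \<partial>measure_pmf M)"
    by (rule nn_integral_eq_integral) (auto intro!: measure_pmf.integrable_const_bound[where B=1])
  finally show ?thesis
    by (simp add: measure_pmf.emeasure_eq_measure)
qed

lemma set_frac_perc: "S \<in> set_pmf (frac_perc M p n) \<Longrightarrow> S \<subseteq> {..<M^n}"
proof (induction n arbitrary: S)
  case 0 then show ?case by simp
next
  case (Suc n)
  then obtain S0 f where S0: "S0 \<in> set_pmf (frac_perc M p n)" and S: "S = {j \<in> children M S0. f j}"
    by auto
  have "S0 \<subseteq> {..<M^n}" using Suc.IH S0 by blast
  then have "children M S0 \<subseteq> {..<M^Suc n}"
  proof (auto simp: children_def)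
    fix i x assume "S0 \<subseteq> {..<M^n}" "i \<in> S0" "x < i * M + M"
    then have "i + 1 \<le> M^n" by auto
    then have "(i+1) * M \<le> M^n * M" by (rule mult_right_mono) simp
    then show "x < M * M^n" using \<open>x < i * M + M\<close> by (simp add: algebra_simps)
  qed
  then show ?case using S by auto
qed

lemma finite_set_frac_perc: "finite (set_pmf (frac_perc M p n))"
  by (rule finite_subset[of _ "Pow {..<M^n}"]) (auto dest: set_frac_perc)

lemma finite_frac_perc: "S \<in> set_pmf (frac_perc M p n) \<Longrightarrow> finite S"
  by (meson finite_lessThan finite_subset set_frac_perc)

lemma children_iff: "M > 0 \<Longrightarrow> i \<in> children M S \<longleftrightarrow> i div M \<in> S"
proof
  assume "M > 0" "i \<in> children M S"
  then obtain a where "a \<in> S" "a * M \<le> i" "i < a * M + M" by (auto simp: children_def)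
  then have "i div M = a" using \<open>M>0\<close>
    by (metis add.commute div_nat_eqI mult.commute mult_Suc_right)
  then show "i div M \<in> S" using \<open>a \<in> S\<close> by simp
next
  assume "M > 0" "i div M \<in> S"
  then show "i \<in> children M S" unfolding children_def
    by (auto intro!: bexI[of _ "i div M"]) (metis add.commute div_mult_mod_eq mod_less_divisor nat_add_left_cancel_less)+
qed



lemma inner_prob:
  assumes "finite C" "A \<subseteq> C" "0 \<le> p" "p \<le> 1"
  shows "measure (measure_pmf (Pi_pmf C False (\<lambda>_. bernoulli_pmf p))) {f. \<forall>j\<in>A. f j} = p ^ card A"
proof -
  have fin: "finite A" using assms finite_subset by blast
  have "{f. \<forall>j\<in>A. f j} = Pi C (\<lambda>j. if j \<in> A then {True} else UNIV)"
    using assms(2) by (auto simp: Pi_def)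
  then have "measure (measure_pmf (Pi_pmf C False (\<lambda>_. bernoulli_pmf p))) {f. \<forall>j\<in>A. f j}
     = (\<Prod>x\<in>C. measure (measure_pmf (bernoulli_pmf p)) (if x \<in> A then {True} else UNIV))"
    using assms(1) by (simp add: measure_Pi_pmf_Pi)
  also have "\<dots> = (\<Prod>x\<in>C. if x \<in> A then p else 1)"
    by (rule prod.cong) (use assms in \<open>auto simp: measure_pmf_single\<close>)
  also have "\<dots> = p ^ card A"
    using assms(1,2) by (simp add: prod.If_cases Int_absorb1)
  finally show ?thesis .
qed

lemma Q_Suc:
  assumes "M > 0" "finite A" "0 \<le> p" "p \<le> 1"
  shows "measure (measure_pmf (frac_perc M p (Suc n))) {S. A \<subseteq> S}
       = p ^ card A * measure (measure_pmf (frac_perc M p n)) {S. (\<lambda>i. i div M) ` A \<subseteq> S}"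
proof -
  have inner: "measure (measure_pmf (map_pmf (\<lambda>f. {j \<in> children M S0. f j})
              (Pi_pmf (children M S0) False (\<lambda>_. bernoulli_pmf p)))) {S. A \<subseteq> S}
      = p ^ card A * indicator {S. (\<lambda>i. i div M) ` A \<subseteq> S} S0" if "finite S0" for S0
  proof -
    have finC: "finite (children M S0)" using that by (simp add: children_def)
    show ?thesis
    proof (cases "A \<subseteq> children M S0")
      case True
      then have "(\<lambda>i. i div M) ` A \<subseteq> S0" using children_iff[OF assms(1)] by auto
      moreover have "((\<lambda>f. {j \<in> children M S0. f j}) -` {S. A \<subseteq> S}) = {f. \<forall>j\<in>A. f j}"
        using True by auto
      ultimately show ?thesis using inner_prob[OF finC True assms(3,4)] by simp
    next
      case False
      then have "\<not> (\<lambda>i. i div M) ` A \<subseteq> S0" using children_iff[OF assms(1)] by auto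
      moreover have "((\<lambda>f. {j \<in> children M S0. f j}) -` {S. A \<subseteq> S}) = {}"
        using False by auto
      ultimately show ?thesis by simp
    qed
  qed
  have "measure (measure_pmf (frac_perc M p (Suc n))) {S. A \<subseteq> S}
     = (\<integral>S0. measure (measure_pmf (map_pmf (\<lambda>f. {j \<in> children M S0. f j})
              (Pi_pmf (children M S0) False (\<lambda>_. bernoulli_pmf p)))) {S. A \<subseteq> S} \<partial>measure_pmf (frac_perc M p n))"
    by (simp only: frac_perc.simps measure_bind_pmf_real)
  also have "\<dots> = (\<integral>S0. p ^ card A * indicator {S. (\<lambda>i. i div M) ` A \<subseteq> S} S0 \<partial>measure_pmf (frac_perc M p n))"
    by (rule integral_cong_AE) (simp_all add: AE_measure_pmf_iff inner[OF finite_frac_perc] del: measure_map_pmf)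
  also have "\<dots> = p ^ card A * measure (measure_pmf (frac_perc M p n)) {S. (\<lambda>i. i div M) ` A \<subseteq> S}"
    by simp
  finally show ?thesis .
qed

lemma Q_0: "measure (measure_pmf (frac_perc M p 0)) {S. A \<subseteq> S} = (if A \<subseteq> {0} then 1 else 0)"
  by simp

lemma Q_single:
  assumes "M > 0" "0 \<le> p" "p \<le> 1"
  shows "measure (measure_pmf (frac_perc M p n)) {S. {i} \<subseteq> S} = (if i < M^n then p^n else 0)"
proof (induction n arbitrary: i)
  case 0 then show ?case by simp
next
  case (Suc n)
  have "i div M < M^n \<longleftrightarrow> i < M^Suc n"
    using assms(1) by (simp add: div_less_iff_less_mult mult.commute)
  then show ?case using Q_Suc[OF assms(1) _ assms(2,3), of "{i}" n] Suc.IH[of "i div M"] by simp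
qed



lemma sum_split_add: fixes m k :: nat shows "(\<Sum>j<m+k. F j) = (\<Sum>j<m. F j) + (\<Sum>r<k. F (m + r))"
  by (induction k) (simp_all add: add.assoc)

lemma sum_group: fixes M K :: nat shows "(\<Sum>j<M*K. F j) = (\<Sum>a<K. \<Sum>r<M. F (a*M + r))"
proof (induction K)
  case 0 then show ?case by simp
next
  case (Suc K)
  have "(\<Sum>j<M*Suc K. F j) = (\<Sum>j<M*K + M. F j)" by (simp add: algebra_simps)
  also have "\<dots> = (\<Sum>j<M*K. F j) + (\<Sum>r<M. F (M*K + r))" by (rule sum_split_add)
  finally show ?case using Suc.IH by (simp add: mult.commute)
qed

lemma sum_from1: fixes n :: nat shows "n \<ge> 1 \<Longrightarrow> (\<Sum>j<n. F j) = F 0 + (\<Sum>j\<in>{1..<n}. F j)"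
proof -
  assume "n \<ge> 1"
  then have "{..<n} = insert 0 {1..<n}" by auto
  then show ?thesis by simp
qed

lemma sum_group1:
  fixes M K :: nat and F :: "nat \<Rightarrow> real"
  assumes "M \<ge> 1" "K \<ge> 1"
    and c: "\<And>a r. a < K \<Longrightarrow> 1 \<le> r \<Longrightarrow> r < M \<Longrightarrow> F (a*M + r) = (c::real)"
    and h: "\<And>a. 1 \<le> a \<Longrightarrow> a < K \<Longrightarrow> F (a*M) = H a"
  shows "(\<Sum>j\<in>{1..<M*K}. F j) = real K * (real M - 1) * c + (\<Sum>a\<in>{1..<K}. H a)"
proof -
  have MK: "M * K \<ge> 1" using assms by simp
  have "F 0 + (\<Sum>j\<in>{1..<M*K}. F j) = (\<Sum>a<K. \<Sum>r<M. F (a*M + r))"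
    using sum_group[where M=M and K=K and F=F] sum_from1[OF MK, of F] by simp
  also have "\<dots> = (\<Sum>a<K. F (a*M) + (\<Sum>r\<in>{1..<M}. F (a*M + r)))"
    by (rule sum.cong[OF refl]) (metis (no_types, lifting) add_0_right sum_from1[OF assms(1)])
  also have "\<dots> = (\<Sum>a<K. F (a*M) + (real M - 1) * c)"
  proof (rule sum.cong[OF refl])
    fix a assume "a \<in> {..<K}"
    then have "(\<Sum>r\<in>{1..<M}. F (a*M + r)) = (\<Sum>r\<in>{1..<M}. c)"
      by (intro sum.cong) (auto intro: c)
    then show "F (a*M) + (\<Sum>r\<in>{1..<M}. F (a*M + r)) = F (a*M) + (real M - 1) * c"
      using assms(1) by (simp add: of_nat_diff)
  qed
  also have "\<dots> = (\<Sum>a<K. F (a*M)) + real K * (real M - 1) * c"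
    by (simp add: sum.distrib)
  also have "(\<Sum>a<K. F (a*M)) = F 0 + (\<Sum>a\<in>{1..<K}. H a)"
    using sum_from1[OF assms(2), of "\<lambda>a. F (a*M)"] h by simp
  finally show ?thesis by simp
qed



lemma divh: fixes a M q :: nat assumes "q < M" shows "(a*M + q) div M = a"
proof -
  have "(q + a*M) div M = q div M + a" using assms by simp
  then show ?thesis using assms by (simp add: add.commute)
qed

definition gg :: "nat \<Rightarrow> real \<Rightarrow> nat \<Rightarrow> nat \<Rightarrow> real" where
  "gg M p n j = measure (measure_pmf (frac_perc M p n)) {S. {j - 1, j} \<subseteq> S}"

lemma gg_rec1:
  assumes "M > 0" "0 \<le> p" "p \<le> 1" "1 \<le> r" "r < M" "a < M^n"
  shows "gg M p (Suc n) (a*M + r) = p^2 * p^n"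
proof -
  have c: "card {a*M + r - 1, a*M + r} = 2" using assms by auto
  have e: "a*M + r - 1 = a*M + (r - 1)" using assms by simp
  have d1: "(a*M + r - 1) div M = a" unfolding e by (rule divh) (use assms in simp)
  have d2: "(a*M + r) div M = a" using assms by simp
  have "(\<lambda>i. i div M) ` {a*M + r - 1, a*M + r} = {a}" using d1 d2 by simp
  note img = this
  have q: "measure (measure_pmf (frac_perc M p (Suc n))) {S. {a*M + r - 1, a*M + r} \<subseteq> S}
     = p ^ card {a*M + r - 1, a*M + r} * measure (measure_pmf (frac_perc M p n)) {S. (\<lambda>i. i div M) ` {a*M + r - 1, a*M + r} \<subseteq> S}"
    by (rule Q_Suc) (use assms in auto)
  show ?thesis unfolding gg_def q img c Q_single[OF assms(1,2,3)] using assms(6) by simp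
qed

lemma gg_rec0:
  assumes "M > 0" "0 \<le> p" "p \<le> 1" "1 \<le> a"
  shows "gg M p (Suc n) (a*M) = p^2 * gg M p n a"
proof -
  have "a*M \<ge> 1" using assms by simp
  then have "a*M - 1 \<noteq> a*M" by linarith
  then have c: "card {a*M - 1, a*M} = 2" by simp
  have e: "a*M - 1 = (a-1)*M + (M-1)" using assms by (cases a) (auto simp: algebra_simps)
  have d1: "(a*M - 1) div M = a - 1" unfolding e by (rule divh) (use assms in simp)
  have d2: "(a*M) div M = a" using assms by simp
  have "(\<lambda>i. i div M) ` {a*M - 1, a*M} = {a - 1, a}" using d1 d2 by simp
  note img = this
  have q: "measure (measure_pmf (frac_perc M p (Suc n))) {S. {a*M - 1, a*M} \<subseteq> S}
     = p ^ card {a*M - 1, a*M} * measure (measure_pmf (frac_perc M p n)) {S. (\<lambda>i. i div M) ` {a*M - 1, a*M} \<subseteq> S}"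
    by (rule Q_Suc) (use assms in auto)
  show ?thesis unfolding gg_def q img c by simp
qed

definition BB :: "nat \<Rightarrow> real \<Rightarrow> nat \<Rightarrow> real" where
  "BB M p n = (\<Sum>j\<in>{1..<M^n}. gg M p n j)"
definition CC :: "nat \<Rightarrow> real \<Rightarrow> nat \<Rightarrow> real" where
  "CC M p n = (\<Sum>j\<in>{1..<M^n}. (gg M p n j)^2)"

lemma BB_Suc:
  assumes "M > 0" "0 \<le> p" "p \<le> 1"
  shows "BB M p (Suc n) = real M ^ n * (real M - 1) * (p^2 * p^n) + p^2 * BB M p n"
proof -
  have "BB M p (Suc n) = (\<Sum>j\<in>{1..<M*M^n}. gg M p (Suc n) j)" by (simp add: BB_def)
  also have "\<dots> = real (M^n) * (real M - 1) * (p^2 * p^n) + (\<Sum>a\<in>{1..<M^n}. p^2 * gg M p n a)"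
    by (rule sum_group1) (use assms in \<open>auto intro: gg_rec1 gg_rec0\<close>)
  finally show ?thesis by (simp add: BB_def sum_distrib_left)
qed

lemma CC_Suc:
  assumes "M > 0" "0 \<le> p" "p \<le> 1"
  shows "CC M p (Suc n) = real M ^ n * (real M - 1) * (p^2 * p^n)^2 + p^4 * CC M p n"
proof -
  have "CC M p (Suc n) = (\<Sum>j\<in>{1..<M*M^n}. (gg M p (Suc n) j)^2)" by (simp add: CC_def)
  also have "\<dots> = real (M^n) * (real M - 1) * (p^2 * p^n)^2 + (\<Sum>a\<in>{1..<M^n}. p^4 * (gg M p n a)^2)"
    by (rule sum_group1) (use assms in \<open>auto simp: gg_rec1 gg_rec0 power_mult_distrib\<close>)
  finally show ?thesis by (simp add: CC_def sum_distrib_left)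
qed

lemma BB_closed:
  assumes "M \<ge> 2" "0 \<le> p" "p \<le> 1"
  shows "BB M p n = (real M - 1) * p^(n+1) * (real M ^ n - p^n) / (real M - p)"
proof (induction n)
  case 0 then show ?case by (simp add: BB_def)
next
  case (Suc n)
  have ne: "real M - p \<noteq> 0" using assms by simp
  have alg: "x * (m - 1) * (p^2 * y) + p^2 * ((m - 1) * (p * y) * (x - y) / (m - p))
     = (m - 1) * (p * (p * y)) * (m * x - p * y) / (m - p)" if "m - p \<noteq> 0" for m x y :: real
    using that by (simp add: field_simps) (simp add: algebra_simps power2_eq_square)
  show ?case using alg[OF ne, of "real M ^ n" "p ^ n"] BB_Suc[of M p n] assms Suc.IH
    by simp
qed

lemma CC_closed:
  assumes "M \<ge> 2" "0 \<le> p" "p \<le> 1"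
  shows "CC M p n = (real M - 1) * p^(2*n+2) * (real M ^ n - p^(2*n)) / (real M - p^2)"
proof (induction n)
  case 0 then show ?case by (simp add: CC_def)
next
  case (Suc n)
  have "p^2 \<le> 1" using assms by (simp add: power_le_one)
  then have ne: "real M - p^2 \<noteq> 0" using assms by simp
  have alg: "x * (m - 1) * (q^2 * y^2) + q^2 * ((m - 1) * (q * y^2) * (x - y^2) / (m - q))
     = (m - 1) * (q * (q * y^2)) * (m * x - q * y^2) / (m - q)" if "m - q \<noteq> 0" for m q x y :: real
    using that by (simp add: field_simps) (simp add: algebra_simps power2_eq_square)
  have a: "p^(2*n) = (p^n)^2" by (metis power_mult mult.commute)
  have "2 * Suc n + 2 = 2 + (2 + 2*n)" by simp
  then have e11: "p^(2 * Suc n + 2) = p^2 * (p^2 * (p^n)^2)" by (simp only: power_add a)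
  have "2 * n + 2 = 2 + 2*n" by simp
  then have e12: "p^(2 * n + 2) = p^2 * (p^n)^2" by (simp only: power_add a)
  have "2 * Suc n = 2 + 2*n" by simp
  then have e13: "p^(2 * Suc n) = p^2 * (p^n)^2" by (simp only: power_add a)
  have e15: "(p\<^sup>2 * p ^ n)\<^sup>2 = p^2 * p^2 * (p^n)^2" "(p::real)^4 = p^2 * p^2"
    by (simp_all add: power_mult_distrib power2_eq_square eval_nat_numeral)
  note e1 = e11 e12 e13 a e15
  show ?case using alg[OF ne, of "real M ^ n" "p ^ n"] CC_Suc[of M p n] assms Suc.IH
    unfolding e1 by (simp add: mult_ac power2_eq_square eval_nat_numeral)
qed



definition pat :: "nat set \<Rightarrow> nat set \<Rightarrow> nat \<Rightarrow> bool" where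
  "pat S T j = ((j-1 \<in> S \<and> j \<notin> S \<and> j-1 \<notin> T \<and> j \<in> T) \<or> (j-1 \<notin> S \<and> j \<in> S \<and> j-1 \<in> T \<and> j \<notin> T))"

lemma mem_I: assumes "d > 0" shows "x \<in> {real i / d .. (real i + 1) / d} \<longleftrightarrow> real i \<le> x * d \<and> x * d \<le> real i + 1"
  using assms by (simp add: divide_le_eq le_divide_eq)

lemma mem_grid: "M > 0 \<Longrightarrow> x \<in> grid_set M n S \<longleftrightarrow> (\<exists>i\<in>S. real i \<le> x * real M ^ n \<and> x * real M ^ n \<le> real i + 1)"
  unfolding grid_set_def using mem_I[of "real M ^ n" x] by auto

lemma limpt_common:
  assumes "M > 0" "i \<in> S" "i \<in> T" "real i \<le> x * real M ^ n" "x * real M ^ n \<le> real i + 1"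
  shows "x islimpt (grid_set M n S \<inter> grid_set M n T)"
proof -
  define d where "d = real M ^ n"
  have d: "d > 0" using assms(1) by (simp add: d_def)
  have sub: "{real i / d .. (real i + 1) / d} \<subseteq> grid_set M n S \<inter> grid_set M n T"
    using assms(2,3) unfolding grid_set_def d_def by auto
  have lt: "real i / d < (real i + 1) / d" using d by (simp add: divide_strict_right_mono)
  have "x \<in> {real i / d .. (real i + 1) / d}" using mem_I[OF d] assms(4,5) by (simp add: d_def)
  then have "x islimpt {real i / d .. (real i + 1) / d}" using lt by simp
  then show ?thesis using sub islimpt_subset by blast
qed

lemma not_limpt:
  assumes "M > 0" "1 \<le> j" "j \<notin> A" "j - 1 \<notin> B"
  shows "\<not> (real j / real M ^ n) islimpt (grid_set M n A \<inter> grid_set M n B)"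
proof
  define d where "d = real M ^ n"
  have d: "d > 0" using assms(1) by (simp add: d_def)
  assume "(real j / real M ^ n) islimpt (grid_set M n A \<inter> grid_set M n B)"
  then obtain y where y: "y \<in> grid_set M n A \<inter> grid_set M n B" "y \<noteq> real j / d" "dist y (real j / d) < 1 / d"
    unfolding islimpt_approachable d_def using d d_def by (meson divide_pos_pos zero_less_one)
  from y(1) have "y \<in> grid_set M n A" by simp
  then obtain i where i: "i \<in> A" "real i \<le> y * d" "y * d \<le> real i + 1"
    unfolding mem_grid[OF assms(1)] d_def by blast
  from y(1) have "y \<in> grid_set M n B" by simp
  then obtain k where k: "k \<in> B" "real k \<le> y * d" "y * d \<le> real k + 1"
    unfolding mem_grid[OF assms(1)] d_def by blast
  note ik = i(1) k(1) i(2,3) k(2,3)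
  have "\<bar>y - real j / d\<bar> < 1 / d" using y(3) by (simp add: dist_real_def)
  moreover have "y * d - real j = (y - real j / d) * d" using d by (simp add: field_simps)
  ultimately have "\<bar>y * d - real j\<bar> < 1" using d
    by (simp add: abs_mult less_divide_eq)
  moreover have "y * d \<noteq> real j" using y(2) d by (auto simp: eq_divide_eq)
  ultimately consider "real j - 1 < y * d" "y * d < real j" | "real j < y * d" "y * d < real j + 1" by linarith
  then show False
  proof cases
    case 1
    then have "real k < real j" "real j < real k + 2" using ik by linarith+
    then have "k < j" "j < k + 2" by linarith+
    then have "k = j - 1" by linarith
    then show False using ik(2) assms(4) by simp
  next
    case 2
    then have "real j < real i + 1" "real i < real j + 1" using ik by linarith+
    then have "j < i + 1" "i < j + 1" by linarith+
    then have "i = j" by linarith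
    then show False using ik(1) assms(3) by simp
  qed
qed

lemma isolated_char:
  assumes "M > 0"
  shows "isolated_pts (grid_set M n S \<inter> grid_set M n T) = (\<lambda>j. real j / real M ^ n) ` {j. 1 \<le> j \<and> pat S T j}"
proof
  define d where "d = real M ^ n"
  have d: "d > 0" using assms(1) by (simp add: d_def)
  show "isolated_pts (grid_set M n S \<inter> grid_set M n T) \<subseteq> (\<lambda>j. real j / real M ^ n) ` {j. 1 \<le> j \<and> pat S T j}"
  proof
    fix x assume x: "x \<in> isolated_pts (grid_set M n S \<inter> grid_set M n T)"
    then have xz: "x \<in> grid_set M n S \<inter> grid_set M n T" and nl: "\<not> x islimpt (grid_set M n S \<inter> grid_set M n T)"
      by (auto simp: isolated_pts_def)
    from xz have "x \<in> grid_set M n S" by simp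
    then obtain i where i: "i \<in> S" "real i \<le> x * d" "x * d \<le> real i + 1"
      unfolding mem_grid[OF assms(1)] d_def by blast
    from xz have "x \<in> grid_set M n T" by simp
    then obtain k where k: "k \<in> T" "real k \<le> x * d" "x * d \<le> real k + 1"
      unfolding mem_grid[OF assms(1)] d_def by blast
    note ik = i(1) k(1) i(2,3) k(2,3)
    have notboth: "\<not> (l \<in> S \<and> l \<in> T)" if "real l \<le> x * d" "x * d \<le> real l + 1" for l
      using limpt_common[OF assms(1), of l S T x n] that nl by (auto simp: d_def)
    have "i \<noteq> k" using notboth[OF ik(3,4)] ik(1,2) by auto
    have lt_cases: "(real k = real i + 1 \<and> x * d = real i + 1) \<or> (real i = real k + 1 \<and> x * d = real k + 1)"
    proof (cases "i < k")
      case True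
      have "real k < real i + 2" using ik(4,5) by linarith
      then have "k < i + 2" by (metis of_nat_add of_nat_less_iff of_nat_numeral)
      then have "k = i + 1" using True by linarith
      then show ?thesis using ik(4,5) by simp
    next
      case False
      then have "k < i" using \<open>i \<noteq> k\<close> by linarith
      have "real i < real k + 2" using ik(3,6) by linarith
      then have "i < k + 2" by (metis of_nat_add of_nat_less_iff of_nat_numeral)
      then have "i = k + 1" using \<open>k < i\<close> by linarith
      then show ?thesis using ik(3,6) by simp
    qed
    then consider "real k = real i + 1" "x * d = real i + 1" | "real i = real k + 1" "x * d = real k + 1"
      by blast
    then show "x \<in> (\<lambda>j. real j / real M ^ n) ` {j. 1 \<le> j \<and> pat S T j}"
    proof cases
      case 1
      then have kk: "k = i + 1" by linarith
      have "k \<notin> S" using notboth[of k] ik(2) 1 by (simp add: kk)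
      moreover have "i \<notin> T" using notboth[of i] ik(1) 1 by simp
      ultimately have "pat S T k" using ik(1,2) kk by (simp add: pat_def)
      moreover have "x = real k / real M ^ n" using 1 d kk by (simp add: d_def field_simps)
      ultimately show ?thesis using kk by (intro image_eqI[where x=k]) auto
    next
      case 2
      then have ii: "i = k + 1" by linarith
      have "i \<notin> T" using notboth[of i] ik(1) 2 by (simp add: ii)
      moreover have "k \<notin> S" using notboth[of k] ik(2) 2 by simp
      ultimately have "pat S T i" using ik(1,2) ii by (simp add: pat_def)
      moreover have "x = real i / real M ^ n" using 2 d ii by (simp add: d_def field_simps)
      ultimately show ?thesis using ii by (intro image_eqI[where x=i]) auto
    qed
  qed
next
  define d where "d = real M ^ n"
  have d: "d > 0" using assms(1) by (simp add: d_def)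
  show "(\<lambda>j. real j / real M ^ n) ` {j. 1 \<le> j \<and> pat S T j} \<subseteq> isolated_pts (grid_set M n S \<inter> grid_set M n T)"
  proof clarify
    fix j assume j: "1 \<le> j" "pat S T j"
    have e: "real (j - 1) + 1 = real j" using j(1) by (simp add: of_nat_diff)
    have xd: "real j / real M ^ n * real M ^ n = real j" using d by (simp add: d_def)
    have inI: "real j / real M ^ n \<in> grid_set M n A" if "j - 1 \<in> A \<or> j \<in> A" for A
      using that mem_grid[OF assms(1), of "real j / real M ^ n" n A] xd e by force
    have mem: "real j / real M ^ n \<in> grid_set M n S \<inter> grid_set M n T"
      using j(2) inI[of S] inI[of T] by (auto simp: pat_def)
    have "\<not> (real j / real M ^ n) islimpt (grid_set M n S \<inter> grid_set M n T)"
      using j(2) unfolding pat_def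
    proof
      assume "j - 1 \<in> S \<and> j \<notin> S \<and> j - 1 \<notin> T \<and> j \<in> T"
      then show ?thesis using not_limpt[OF assms(1) j(1), of S T n] by simp
    next
      assume "j - 1 \<notin> S \<and> j \<in> S \<and> j - 1 \<in> T \<and> j \<notin> T"
      then show ?thesis using not_limpt[OF assms(1) j(1), of T S n] by (simp add: Int_commute)
    qed
    then show "real j / real M ^ n \<in> isolated_pts (grid_set M n S \<inter> grid_set M n T)"
      using mem by (simp add: isolated_pts_def)
  qed
qed



lemma prod_meas: "measure (measure_pmf (pair_pmf P Q)) (A \<times> B) = measure (measure_pmf P) A * measure (measure_pmf Q) B"
proof -
  have "measure (measure_pmf (pair_pmf P Q)) (A \<times> B) = measure (measure_pmf (pair_pmf P Q)) ((A \<times> B) \<inter> set_pmf (pair_pmf P Q))"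
    by (rule measure_Int_set_pmf[symmetric])
  also have "(A \<times> B) \<inter> set_pmf (pair_pmf P Q) = (A \<inter> set_pmf P) \<times> (B \<inter> set_pmf Q)" by auto
  also have "measure (measure_pmf (pair_pmf P Q)) \<dots> = measure (measure_pmf P) (A \<inter> set_pmf P) * measure (measure_pmf Q) (B \<inter> set_pmf Q)"
    by (rule measure_pmf_prob_product) auto
  finally show ?thesis by (simp add: measure_Int_set_pmf)
qed

lemma single_minus:
  assumes "M > 0" "0 \<le> p" "p \<le> 1" "1 \<le> j" "j < M^n"
  shows "measure (measure_pmf (frac_perc M p n)) {S. j-1 \<in> S \<and> j \<notin> S} = p^n - gg M p n j"
    and "measure (measure_pmf (frac_perc M p n)) {S. j-1 \<notin> S \<and> j \<in> S} = p^n - gg M p n j"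
proof -
  have "{S. j-1 \<in> S \<and> j \<notin> S} = {S. {j-1} \<subseteq> S} - {S. {j-1, j} \<subseteq> S}" by auto
  then have "measure (measure_pmf (frac_perc M p n)) {S. j-1 \<in> S \<and> j \<notin> S}
     = measure (measure_pmf (frac_perc M p n)) {S. {j-1} \<subseteq> S} - measure (measure_pmf (frac_perc M p n)) {S. {j-1, j} \<subseteq> S}"
    by (simp only:) (rule measure_pmf.finite_measure_Diff, auto)
  then show "measure (measure_pmf (frac_perc M p n)) {S. j-1 \<in> S \<and> j \<notin> S} = p^n - gg M p n j"
    using Q_single[OF assms(1,2,3), of n "j-1"] assms(5) by (simp add: gg_def)
  have "{S. j-1 \<notin> S \<and> j \<in> S} = {S. {j} \<subseteq> S} - {S. {j-1, j} \<subseteq> S}" by auto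
  then have "measure (measure_pmf (frac_perc M p n)) {S. j-1 \<notin> S \<and> j \<in> S}
     = measure (measure_pmf (frac_perc M p n)) {S. {j} \<subseteq> S} - measure (measure_pmf (frac_perc M p n)) {S. {j-1, j} \<subseteq> S}"
    by (simp only:) (rule measure_pmf.finite_measure_Diff, auto)
  then show "measure (measure_pmf (frac_perc M p n)) {S. j-1 \<notin> S \<and> j \<in> S} = p^n - gg M p n j"
    using Q_single[OF assms(1,2,3), of n j] assms(5) by (simp add: gg_def)
qed

lemma pat_prob:
  assumes "M > 0" "0 \<le> p" "p \<le> 1" "1 \<le> j" "j < M^n"
  shows "measure (measure_pmf (pair_pmf (frac_perc M p n) (frac_perc M p n))) {ST. pat (fst ST) (snd ST) j}
       = 2 * (p^n - gg M p n j)^2"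
proof -
  define A where "A = {S. j-1 \<in> S \<and> j \<notin> S}"
  define B where "B = {S. j-1 \<notin> S \<and> j \<in> S}"
  have e: "{ST. pat (fst ST) (snd ST) j} = A \<times> B \<union> B \<times> A"
    by (auto simp: pat_def A_def B_def)
  have "measure (measure_pmf (pair_pmf (frac_perc M p n) (frac_perc M p n))) (A \<times> B \<union> B \<times> A)
     = measure (measure_pmf (pair_pmf (frac_perc M p n) (frac_perc M p n))) (A \<times> B)
      + measure (measure_pmf (pair_pmf (frac_perc M p n) (frac_perc M p n))) (B \<times> A)"
    by (rule measure_pmf.finite_measure_Union) (auto simp: A_def B_def)
  then show ?thesis unfolding e prod_meas using single_minus[OF assms] unfolding A_def B_def
    by (simp add: power2_eq_square)
qed

lemma num_iso_sum:
  assumes "M > 0" "S \<subseteq> {..<M^n}" "T \<subseteq> {..<M^n}"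
  shows "real (num_isolated (grid_set M n S \<inter> grid_set M n T))
       = (\<Sum>j\<in>{1..<M^n}. indicator {ST. pat (fst ST) (snd ST) j} (S, T))"
proof -
  have inj: "inj_on (\<lambda>j. real j / real M ^ n) X" for X
    using assms(1) by (intro inj_onI) (simp add: divide_cancel_right)
  have set: "{j. 1 \<le> j \<and> pat S T j} = {j\<in>{1..<M^n}. pat S T j}"
    using assms(2,3) by (auto simp: pat_def)
  have c: "num_isolated (grid_set M n S \<inter> grid_set M n T) = card {j\<in>{1..<M^n}. pat S T j}"
    unfolding num_isolated_def isolated_char[OF assms(1)] card_image[OF inj] set ..
  have "(\<Sum>j\<in>{j\<in>{1..<M^n}. pat S T j}. (1::real)) = (\<Sum>j\<in>{1..<M^n}. if pat S T j then 1 else 0)"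
    by (rule sum.inter_filter) simp
  then have "real (card {j\<in>{1..<M^n}. pat S T j}) = (\<Sum>j\<in>{1..<M^n}. if pat S T j then 1 else 0)"
    by simp
  also have "\<dots> = (\<Sum>j\<in>{1..<M^n}. indicator {ST. pat (fst ST) (snd ST) j} (S, T))"
    by (rule sum.cong) (auto simp: indicator_def)
  finally show ?thesis unfolding c .
qed



lemma final_alg:
  fixes m p X Y :: real
  assumes "X > 0" "m - p \<noteq> 0" "m - p^2 \<noteq> 0"
  shows "2 * ((X - 1) * Y^2 - 2 * Y * ((m - 1) * (Y * p) * (X - Y) / (m - p)) + (m - 1) * (Y^2 * p^2) * (X - Y^2) / (m - p^2))
    = (X * Y^2) * (2 - 2 / X - 4 * p * (m - 1) / (m - p) * (1 - Y / X) + 2 * p^2 * (m - 1) / (m - p^2) * (1 - Y^2 / X))"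
proof -
  have t1: "X * Y^2 * (1 - Y / X) = Y^2 * (X - Y)" "X * Y^2 * (1 - Y^2 / X) = Y^2 * (X - Y^2)"
    "X * Y^2 * (2 / X) = 2 * Y^2"
    using assms(1) by (simp_all add: field_simps)
  have ring: "c * (2 - d - a * e + b * f) = 2 * c - c * d - a * (c * e) + b * (c * f)" for a b c d e f :: real
    by (simp add: algebra_simps)
  have "(X * Y^2) * (2 - 2 / X - 4 * p * (m - 1) / (m - p) * (1 - Y / X) + 2 * p^2 * (m - 1) / (m - p^2) * (1 - Y^2 / X))
     = 2 * (X * Y^2) - 2 * Y^2 - 4 * p * (m - 1) / (m - p) * (Y^2 * (X - Y))
       + 2 * p^2 * (m - 1) / (m - p^2) * (Y^2 * (X - Y^2))"
    unfolding ring t1 ..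
  moreover have "2 * ((X - 1) * Y^2 - 2 * Y * ((m - 1) * (Y * p) * (X - Y) / (m - p)) + (m - 1) * (Y^2 * p^2) * (X - Y^2) / (m - p^2))
     = 2 * (X * Y^2) - 2 * Y^2 - 4 * p * (m - 1) / (m - p) * (Y^2 * (X - Y))
       + 2 * p^2 * (m - 1) / (m - p^2) * (Y^2 * (X - Y^2))"
    using assms(2,3) by (simp add: field_simps) (simp add: algebra_simps power2_eq_square)
  ultimately show ?thesis by simp
qed

theorem proposition5p7:
  fixes M :: nat and p :: real and n :: nat
  assumes "M \<ge> 2" and "0 \<le> p" and "p \<le> 1"
  shows "measure_pmf.expectation (pair_pmf (frac_perc M p n) (frac_perc M p n))
           (\<lambda>(S, T). real (num_isolated (grid_set M n S \<inter> grid_set M n T)))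
         = (real M * p ^ 2) ^ n *
           (2 - 2 / real M ^ n
            - 4 * p * (real M - 1) / (real M - p) * (1 - (p / real M) ^ n)
            + 2 * p ^ 2 * (real M - 1) / (real M - p ^ 2) * (1 - (p ^ 2 / real M) ^ n))"
proof -
  have M0: "M > 0" using assms(1) by simp
  let ?P = "pair_pmf (frac_perc M p n) (frac_perc M p n)"
  have fin: "finite (set_pmf ?P)" by (simp add: finite_set_frac_perc)
  have "measure_pmf.expectation ?P (\<lambda>(S, T). real (num_isolated (grid_set M n S \<inter> grid_set M n T)))
     = measure_pmf.expectation ?P (\<lambda>ST. \<Sum>j\<in>{1..<M^n}. indicator {ST. pat (fst ST) (snd ST) j} ST)"
  proof (rule integral_cong_AE)
    show "AE x in measure_pmf ?P. (case x of (S, T) \<Rightarrow> real (num_isolated (grid_set M n S \<inter> grid_set M n T)))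
        = (\<Sum>j\<in>{1..<M^n}. indicator {ST. pat (fst ST) (snd ST) j} x)"
      unfolding AE_measure_pmf_iff
      using num_iso_sum[OF M0] set_frac_perc by fastforce
  qed simp_all
  also have "\<dots> = (\<Sum>j\<in>{1..<M^n}. measure_pmf.expectation ?P (indicator {ST. pat (fst ST) (snd ST) j}))"
    by (rule Bochner_Integration.integral_sum[where f="\<lambda>j::nat. (indicator {ST. pat (fst ST) (snd ST) j} :: nat set \<times> nat set \<Rightarrow> real)"]) (rule integrable_measure_pmf_finite[OF fin])
  also have "\<dots> = (\<Sum>j\<in>{1..<M^n}. 2 * (p^n - gg M p n j)^2)"
    by (rule sum.cong[OF refl]) (simp add: pat_prob[OF M0 assms(2,3)])
  also have "\<dots> = 2 * ((real M ^ n - 1) * (p^n)^2 - 2 * p^n * BB M p n + CC M p n)"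
  proof -
    have "(\<Sum>j\<in>{1..<M^n}. 2 * (p^n - gg M p n j)^2)
        = 2 * ((\<Sum>j\<in>{1..<M^n}. (p^n)^2) - 2 * p^n * (\<Sum>j\<in>{1..<M^n}. gg M p n j) + (\<Sum>j\<in>{1..<M^n}. (gg M p n j)^2))"
      by (simp add: power2_diff sum_subtractf sum.distrib sum_distrib_left algebra_simps)
    moreover have "M^n \<ge> 1" using M0 by simp
    ultimately show ?thesis by (simp add: BB_def CC_def of_nat_diff)
  qed
  also have "\<dots> = (real M * p ^ 2) ^ n *
           (2 - 2 / real M ^ n
            - 4 * p * (real M - 1) / (real M - p) * (1 - (p / real M) ^ n)
            + 2 * p ^ 2 * (real M - 1) / (real M - p ^ 2) * (1 - (p ^ 2 / real M) ^ n))"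
  proof -
    have p2: "p^2 \<le> 1" using assms by (simp add: power_le_one)
    have X: "real M ^ n > 0" using M0 by simp
    have pp: "(p^2)^n = (p^n)^2" "p^(2*n) = (p^n)^2" by (metis power_mult mult.commute)+
    have e: "(real M * p ^ 2) ^ n = real M ^ n * (p^n)^2" "(p / real M) ^ n = p^n / real M ^ n"
      "(p ^ 2 / real M) ^ n = (p^n)^2 / real M ^ n" "p^(n+1) = p^n * p" "p^(2*n+2) = (p^n)^2 * p^2"
      "p^(2*n) = (p^n)^2"
      by (simp_all only: power_mult_distrib power_divide power_add pp power_one_right)
    have ne1: "real M - p \<noteq> 0" "real M - p^2 \<noteq> 0" using assms p2 by auto
    show ?thesis
      unfolding BB_closed[OF assms] CC_closed[OF assms] e
      by (rule final_alg[OF X ne1])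
  qed
  finally show ?thesis .
qed

end
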